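(* For a nonzero ring $R$, the following are equivalent: (1) $R$ is local and uniquely weakly $J$-clean; (2) $R$ is uniquely weakly $J$-clean and $0,1$ are the only idempotents of $R$; (3) $R/J(R)\cong\mathbb{Z}_2$ or $R/J(R)\cong\mathbb{Z}_3$.
   Context: All rings are associative with identity; $J(R)$ is the Jacobson radical and $Idem(R)$ the set of idempotents. $R$ is uniquely weakly $J$-clean if for every $x\in R$ there exists a unique $e\in Idem(R)$ with $x-e\in J(R)$ or $x+e\in J(R)$. *)

theory Defs
  imports "HOL-Algebra.Algebra"
begin

definition left_ideal :: "('a, 'b) ring_scheme \<Rightarrow> 'a set \<Rightarrow> bool" where
  "left_ideal R I \<longleftrightarrow> additive_subgroup I R \<and>
     (\<forall>r \<in> carrier R. \<forall>x \<in> I. r \<otimes>\<^bsub>R\<^esub> x \<in> I)"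

definition maximal_left_ideal :: "('a, 'b) ring_scheme \<Rightarrow> 'a set \<Rightarrow> bool" where
  "maximal_left_ideal R I \<longleftrightarrow> left_ideal R I \<and> I \<noteq> carrier R \<and>
     (\<forall>K. left_ideal R K \<and> I \<subseteq> K \<longrightarrow> K = I \<or> K = carrier R)"

text \<open>Jacobson radical: intersection of all maximal left ideals (whole ring if there are none).\<close>
definition jacobson :: "('a, 'b) ring_scheme \<Rightarrow> 'a set" where
  "jacobson R = carrier R \<inter> \<Inter> {I. maximal_left_ideal R I}"

definition local_ring :: "('a, 'b) ring_scheme \<Rightarrow> bool" where
  "local_ring R \<longleftrightarrow> (\<exists>!I. maximal_left_ideal R I)"

definition Idem_set :: "('a, 'b) ring_scheme \<Rightarrow> 'a set" where
  "Idem_set R = {e \<in> carrier R. e \<otimes>\<^bsub>R\<^esub> e = e}"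

definition uniquely_weakly_J_clean :: "('a, 'b) ring_scheme \<Rightarrow> bool" where
  "uniquely_weakly_J_clean R \<longleftrightarrow>
     (\<forall>x \<in> carrier R. \<exists>!e. e \<in> Idem_set R \<and>
        (a_minus R x e \<in> jacobson R \<or> x \<oplus>\<^bsub>R\<^esub> e \<in> jacobson R))"

end

theory Submission
  imports Defs
begin


lemma ZMod_hom: "ZMod k \<in> ring_hom \<Z> (ZFact k)"
proof -
  have "ideal (Idl\<^bsub>\<Z>\<^esub> {k}) \<Z>" by (rule int.genideal_ideal) simp
  then have "(+>\<^bsub>\<Z>\<^esub>) (Idl\<^bsub>\<Z>\<^esub> {k}) \<in> ring_hom \<Z> (\<Z> Quot (Idl\<^bsub>\<Z>\<^esub> {k}))" by (rule ideal.rcos_ring_hom)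
  moreover have "ZMod k = (+>\<^bsub>\<Z>\<^esub>) (Idl\<^bsub>\<Z>\<^esub> {k})" by (rule ext) (simp add: ZMod_def)
  ultimately show ?thesis unfolding ZFact_def by simp
qed

lemma ring_Z: "ring \<Z>" using int_is_cring cring.axioms(1) by blast
lemma ring_ZFact: "ring (ZFact k)" using ZFact_is_cring cring.axioms(1) by blast

lemma ZMod_add: "ZMod k (a + b) = ZMod k a \<oplus>\<^bsub>ZFact k\<^esub> ZMod k b"
  using ring_hom_add[OF ZMod_hom, of a b k] by simp
lemma ZMod_mult: "ZMod k (a * b) = ZMod k a \<otimes>\<^bsub>ZFact k\<^esub> ZMod k b"
  using ring_hom_mult[OF ZMod_hom, of a b k] by simp
lemma ZMod_one: "ZMod k 1 = \<one>\<^bsub>ZFact k\<^esub>"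
  using ring_hom_one[OF ZMod_hom, of k] by simp
lemma ZMod_zero: "ZMod k 0 = \<zero>\<^bsub>ZFact k\<^esub>"
  using ring_hom_zero[OF ZMod_hom ring_Z ring_ZFact, of k] by simp
lemma ZMod_closed: "ZMod k a \<in> carrier (ZFact k)"
  using ring_hom_closed[OF ZMod_hom, of a k] by simp

lemma ZFact_carrier: "Y \<in> carrier (ZFact k) \<Longrightarrow> \<exists>n. Y = ZMod k n"
  by (auto simp: ZFact_def FactRing_def A_RCOSETS_defs ZMod_def a_r_coset_def)



context ring begin

lemma left_idealI:
  assumes "I \<subseteq> carrier R" "\<zero> \<in> I" "\<And>x y. x\<in>I \<Longrightarrow> y\<in>I \<Longrightarrow> x\<oplus>y \<in> I"
    "\<And>x. x\<in>I \<Longrightarrow> \<ominus>x \<in> I" "\<And>r x. r\<in>carrier R \<Longrightarrow> x\<in>I \<Longrightarrow> r\<otimes>x\<in>I"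
  shows "left_ideal R I"
  unfolding left_ideal_def
proof (intro conjI ballI)
  show "additive_subgroup I R"
    apply (rule additive_subgroupI)
    apply (rule add.subgroupI)
    using assms by (auto simp: a_inv_def)
qed (use assms in auto)

lemma left_idealD:
  assumes "left_ideal R I"
  shows "I \<subseteq> carrier R" "\<zero> \<in> I" "\<And>x y. x\<in>I \<Longrightarrow> y\<in>I \<Longrightarrow> x\<oplus>y \<in> I"
    "\<And>x. x\<in>I \<Longrightarrow> \<ominus>x \<in> I" "\<And>r x. r\<in>carrier R \<Longrightarrow> x\<in>I \<Longrightarrow> r\<otimes>x\<in>I"
    "\<And>x y. x\<in>I \<Longrightarrow> y\<in>I \<Longrightarrow> x\<ominus>y \<in> I"
  using assms unfolding left_ideal_def
  by (auto simp: additive_subgroup.a_subset additive_subgroup.a_closed additive_subgroup.zero_closed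
      additive_subgroup.a_inv_closed a_minus_def)

lemma left_ideal_one:
  assumes "left_ideal R I" "\<one> \<in> I" shows "I = carrier R"
  using left_idealD[OF assms(1)] assms(2) by (metis r_one subsetI subset_antisym)

lemma maximal_exists:
  assumes "left_ideal R I" "\<one> \<notin> I"
  shows "\<exists>M. maximal_left_ideal R M \<and> I \<subseteq> M"
proof -
  let ?A = "{K. left_ideal R K \<and> I \<subseteq> K \<and> \<one> \<notin> K}"
  have "\<exists>M\<in>?A. \<forall>Y\<in>?A. M \<subseteq> Y \<longrightarrow> Y = M"
  proof (rule subset_Zorn_nonempty)
    show "?A \<noteq> {}" using assms by auto
    fix C assume C: "C \<noteq> {}" "subset.chain ?A C"
    hence sub: "C \<subseteq> ?A" and ch: "\<And>U V. U\<in>C \<Longrightarrow> V\<in>C \<Longrightarrow> U \<subseteq> V \<or> V \<subseteq> U"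
      by (auto simp: subset.chain_def)
    have "left_ideal R (\<Union>C)"
    proof (rule left_idealI)
      show "\<Union>C \<subseteq> carrier R" using sub left_idealD(1) by blast
      show "\<zero> \<in> \<Union>C" using C(1) sub left_idealD(2) by blast
      show "x \<oplus> y \<in> \<Union>C" if xy: "x \<in> \<Union>C" "y \<in> \<Union>C" for x y
      proof -
        obtain U V where "U\<in>C" "V\<in>C" "x\<in>U" "y\<in>V" using xy by (meson UnionE)
        note uv = this
        have lU: "left_ideal R U" and lV: "left_ideal R V" using uv sub by auto
        show ?thesis
        proof (cases "U \<subseteq> V")
          case True then show ?thesis using uv left_idealD(3)[OF lV, of x y] by blast
        next
          case False then have "V \<subseteq> U" using ch uv by blast
          then show ?thesis using uv left_idealD(3)[OF lU, of x y] by blast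
        qed
      qed
      show "\<ominus>x \<in> \<Union>C" if "x \<in> \<Union>C" for x
        using that sub left_idealD(4) by blast
      show "r \<otimes> x \<in> \<Union>C" if "r \<in> carrier R" "x \<in> \<Union>C" for r x
        using that sub left_idealD(5) by blast
    qed
    moreover have "I \<subseteq> \<Union>C" using C sub by blast
    moreover have "\<one> \<notin> \<Union>C" using sub by blast
    ultimately show "\<Union>C \<in> ?A" by blast
  qed
  then obtain M where M: "M \<in> ?A" "\<forall>Y\<in>?A. M \<subseteq> Y \<longrightarrow> Y = M" by blast
  have "maximal_left_ideal R M"
    unfolding maximal_left_ideal_def
  proof (intro conjI allI impI)
    show "left_ideal R M" using M by blast
    show "M \<noteq> carrier R" using M by auto
    fix K assume K: "left_ideal R K \<and> M \<subseteq> K"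
    show "K = M \<or> K = carrier R"
    proof (cases "\<one> \<in> K")
      case True then show ?thesis using left_ideal_one K by blast
    next
      case False then show ?thesis using M K by blast
    qed
  qed
  then show ?thesis using M by blast
qed

lemma jac_sub: "maximal_left_ideal R M \<Longrightarrow> jacobson R \<subseteq> M"
  unfolding jacobson_def by blast

lemma maximal_left: "maximal_left_ideal R M \<Longrightarrow> left_ideal R M"
  unfolding maximal_left_ideal_def by blast

lemma maximal_one: "maximal_left_ideal R M \<Longrightarrow> \<one> \<notin> M"
  unfolding maximal_left_ideal_def using left_ideal_one by blast

lemma jac_left_ideal: "left_ideal R (jacobson R)"
proof (rule left_idealI)
  show "jacobson R \<subseteq> carrier R" unfolding jacobson_def by blast
  show "\<zero> \<in> jacobson R" unfolding jacobson_def
    using left_idealD(2)[OF maximal_left] by blast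
  show "x \<oplus> y \<in> jacobson R" if "x \<in> jacobson R" "y \<in> jacobson R" for x y
    using that unfolding jacobson_def using left_idealD(3)[OF maximal_left] by blast
  show "\<ominus>x \<in> jacobson R" if "x \<in> jacobson R" for x
    using that unfolding jacobson_def using left_idealD(4)[OF maximal_left] by blast
  show "r \<otimes> x \<in> jacobson R" if "r \<in> carrier R" "x \<in> jacobson R" for r x
    using that unfolding jacobson_def using left_idealD(5)[OF maximal_left] by blast
qed

lemma principal_left: "y \<in> carrier R \<Longrightarrow> left_ideal R {r \<otimes> y | r. r \<in> carrier R}"
proof (rule left_idealI)
  assume y: "y \<in> carrier R"
  show "{r \<otimes> y | r. r \<in> carrier R} \<subseteq> carrier R" using y by auto
  show "\<zero> \<in> {r \<otimes> y | r. r \<in> carrier R}" using y by (auto intro!: exI[of _ \<zero>])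
  show "x \<oplus> z \<in> {r \<otimes> y | r. r \<in> carrier R}" if "x \<in> {r \<otimes> y | r. r \<in> carrier R}" "z \<in> {r \<otimes> y | r. r \<in> carrier R}" for x z
    using that y by (auto simp: l_distr[symmetric])
  show "\<ominus>x \<in> {r \<otimes> y | r. r \<in> carrier R}" if "x \<in> {r \<otimes> y | r. r \<in> carrier R}" for x
    using that y by (auto simp: l_minus[symmetric])
  show "s \<otimes> x \<in> {r \<otimes> y | r. r \<in> carrier R}" if "s \<in> carrier R" "x \<in> {r \<otimes> y | r. r \<in> carrier R}" for s x
    using that y by (auto simp: m_assoc[symmetric])
qed


lemma one_notin_J: assumes "\<one> \<noteq> \<zero>" shows "\<one> \<notin> jacobson R"
proof -
  have "{r \<otimes> \<zero> | r. r \<in> carrier R} = {\<zero>}" by (auto, rule exI[of _ \<zero>], simp)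
  then have "left_ideal R {\<zero>}" using principal_left[of \<zero>] by simp
  then obtain M where "maximal_left_ideal R M" using maximal_exists assms by blast
  then show ?thesis using jac_sub maximal_one by blast
qed

lemma J_left_inv: assumes x: "x \<in> jacobson R" shows "\<exists>u\<in>carrier R. u \<otimes> (\<one> \<ominus> x) = \<one>"
proof (rule ccontr)
  assume no: "\<not> ?thesis"
  have xc: "x \<in> carrier R" using x jac_left_ideal left_idealD(1) by blast
  let ?y = "\<one> \<ominus> x"
  have yc: "?y \<in> carrier R" using xc by simp
  let ?L = "{r \<otimes> ?y | r. r \<in> carrier R}"
  have "\<one> \<notin> ?L" using no by auto
  then obtain M where M: "maximal_left_ideal R M" "?L \<subseteq> M"
    using maximal_exists principal_left[OF yc] by blast
  have "?y \<in> M" using M yc by (auto intro!: exI[of _ \<one>])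
  moreover have "x \<in> M" using M jac_sub x by blast
  ultimately have "?y \<oplus> x \<in> M" using left_idealD(3)[OF maximal_left[OF M(1)]] by blast
  moreover have "?y \<oplus> x = \<one>" using xc by (simp add: a_minus_def a_assoc l_neg)
  ultimately show False using maximal_one[OF M(1)] by simp
qed

lemma idem_left_inv: assumes "e \<in> carrier R" "e \<otimes> e = e" "u \<in> carrier R" "u \<otimes> e = \<one>"
  shows "e = \<one>"
proof -
  have "u \<otimes> (e \<otimes> e) = (u \<otimes> e) \<otimes> e" using assms(1,3) by (simp add: m_assoc)
  then show ?thesis using assms by simp
qed

definition P where "P \<longleftrightarrow> (\<forall>x\<in>carrier R. x \<in> jacobson R \<or> x \<ominus> \<one> \<in> jacobson R \<or> x \<oplus> \<one> \<in> jacobson R)"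

lemma P_idem: assumes "P" shows "Idem_set R = {\<zero>, \<one>}"
proof
  show "{\<zero>, \<one>} \<subseteq> Idem_set R" by (auto simp: Idem_set_def)
  show "Idem_set R \<subseteq> {\<zero>, \<one>}"
  proof
    fix e assume "e \<in> Idem_set R"
    then have ec: "e \<in> carrier R" and ee: "e \<otimes> e = e" by (auto simp: Idem_set_def)
    have JL: "left_ideal R (jacobson R)" by (rule jac_left_ideal)
    have case2: "e = \<one>" if h: "e \<ominus> \<one> \<in> jacobson R"
    proof -
      have "\<ominus> (e \<ominus> \<one>) \<in> jacobson R" using left_idealD(4)[OF JL] h by blast
      then obtain u where u: "u \<in> carrier R" "u \<otimes> (\<one> \<ominus> \<ominus> (e \<ominus> \<one>)) = \<one>"
        using J_left_inv by blast
      have "\<one> \<ominus> \<ominus> (e \<ominus> \<one>) = e" using ec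
        by (simp add: a_minus_def minus_add a_ac r_neg)
      then show ?thesis using idem_left_inv[OF ec ee u(1)] u by simp
    qed
    have "e \<in> jacobson R \<or> e \<ominus> \<one> \<in> jacobson R \<or> e \<oplus> \<one> \<in> jacobson R"
      using assms ec unfolding P_def by blast
    moreover
    { assume h: "e \<in> jacobson R"
      then obtain u where u: "u \<in> carrier R" "u \<otimes> (\<one> \<ominus> e) = \<one>" using J_left_inv by blast
      have "(\<one> \<ominus> e) \<otimes> e = \<zero>" using ec ee by (simp add: a_minus_def l_distr l_minus r_neg)
      then have "e = \<zero>"
        proof -
        have "(u \<otimes> (\<one> \<ominus> e)) \<otimes> e = u \<otimes> ((\<one> \<ominus> e) \<otimes> e)" using u(1) ec by (simp add: m_assoc)
        then show ?thesis using \<open>(\<one> \<ominus> e) \<otimes> e = \<zero>\<close> u ec by simp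
      qed
    }
    moreover
    { assume h: "e \<oplus> \<one> \<in> jacobson R"
      have "e \<otimes> (e \<oplus> \<one>) \<in> jacobson R" using left_idealD(5)[OF JL] h ec by blast
      then have "e \<otimes> (e \<oplus> \<one>) \<ominus> (e \<oplus> \<one>) \<in> jacobson R" using left_idealD(6)[OF JL] h by blast
      moreover have "e \<otimes> (e \<oplus> \<one>) \<ominus> (e \<oplus> \<one>) = e \<ominus> \<one>"
        using ec ee by (simp add: r_distr a_minus_def minus_add a_ac r_neg2)
      ultimately have "e = \<one>" using case2 by simp
    }
    ultimately show "e \<in> {\<zero>, \<one>}" using case2 by blast
  qed
qed

lemma alg1: "x \<in> carrier R \<Longrightarrow> x \<ominus> (x \<ominus> \<one>) = \<one>"
  by (simp only: a_minus_def minus_add minus_minus one_closed add.inv_closed r_neg2)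
lemma alg2: "x \<in> carrier R \<Longrightarrow> (x \<oplus> \<one>) \<ominus> x = \<one>"
  unfolding a_minus_def by (subst a_comm) (simp_all add: r_neg1)
lemma alg3: "x \<in> carrier R \<Longrightarrow> x \<ominus> \<zero> = x"
  by (simp add: a_minus_def)

lemma J_excl:
  assumes "\<one> \<noteq> \<zero>" "x \<in> jacobson R" "x \<ominus> \<one> \<in> jacobson R \<or> x \<oplus> \<one> \<in> jacobson R"
  shows False
proof -
  have JL: "left_ideal R (jacobson R)" by (rule jac_left_ideal)
  have xc: "x \<in> carrier R" using assms(2) left_idealD(1)[OF JL] by blast
  from assms(3) have "\<one> \<in> jacobson R"
  proof
    assume "x \<ominus> \<one> \<in> jacobson R"
    then have "x \<ominus> (x \<ominus> \<one>) \<in> jacobson R" using left_idealD(6)[OF JL] assms(2) by blast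
    then show ?thesis using alg1[OF xc] by simp
  next
    assume "x \<oplus> \<one> \<in> jacobson R"
    then have "(x \<oplus> \<one>) \<ominus> x \<in> jacobson R" using left_idealD(6)[OF JL] assms(2) by blast
    then show ?thesis using alg2[OF xc] by simp
  qed
  then show False using one_notin_J[OF assms(1)] by blast
qed

lemma uwjc_P: assumes "uniquely_weakly_J_clean R" "Idem_set R = {\<zero>, \<one>}" shows P
  unfolding P_def
proof
  fix x assume xc: "x \<in> carrier R"
  then obtain e where "e \<in> Idem_set R" "x \<ominus> e \<in> jacobson R \<or> x \<oplus> e \<in> jacobson R"
    using assms(1) unfolding uniquely_weakly_J_clean_def by blast
  then show "x \<in> jacobson R \<or> x \<ominus> \<one> \<in> jacobson R \<or> x \<oplus> \<one> \<in> jacobson R"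
    using assms(2) alg3[OF xc] xc by auto
qed

lemma P_uwjc: assumes "\<one> \<noteq> \<zero>" P "Idem_set R = {\<zero>, \<one>}" shows "uniquely_weakly_J_clean R"
  unfolding uniquely_weakly_J_clean_def
proof
  fix x assume xc: "x \<in> carrier R"
  have x3: "x \<in> jacobson R \<or> x \<ominus> \<one> \<in> jacobson R \<or> x \<oplus> \<one> \<in> jacobson R"
    using assms(2) xc unfolding P_def by blast
  let ?Q = "\<lambda>e. e \<in> Idem_set R \<and> (x \<ominus> e \<in> jacobson R \<or> x \<oplus> e \<in> jacobson R)"
  have Q: "?Q e \<longleftrightarrow> (e = \<zero> \<and> x \<in> jacobson R) \<or> (e = \<one> \<and> (x \<ominus> \<one> \<in> jacobson R \<or> x \<oplus> \<one> \<in> jacobson R))" for e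
    using assms(3) alg3[OF xc] xc by auto
  show "\<exists>!e. ?Q e"
  proof (cases "x \<in> jacobson R")
    case True
    then have "\<not> (x \<ominus> \<one> \<in> jacobson R \<or> x \<oplus> \<one> \<in> jacobson R)" using J_excl assms(1) by blast
    then show ?thesis using True Q by auto
  next
    case False
    then show ?thesis using x3 Q by auto
  qed
qed

lemma idem_in_max:
  assumes "local_ring R" "maximal_left_ideal R M" "f \<in> carrier R" "f \<otimes> f = f"
  shows "f \<in> M \<or> f = \<one>"
proof (rule ccontr)
  assume h: "\<not> (f \<in> M \<or> f = \<one>)"
  let ?L = "{r \<otimes> f | r. r \<in> carrier R}"
  show False
  proof (cases "\<one> \<in> ?L")
    case True
    then obtain u where u: "u \<in> carrier R" "u \<otimes> f = \<one>" by auto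
    then show False using idem_left_inv[OF assms(3,4) u] h by blast
  next
    case False
    then obtain M' where M': "maximal_left_ideal R M'" "?L \<subseteq> M'"
      using maximal_exists principal_left[OF assms(3)] by blast
    have "M' = M" using assms(1,2) M'(1) unfolding local_ring_def by blast
    moreover have "f \<in> ?L" using assms(3) by (auto intro!: exI[of _ \<one>])
    ultimately show False using M' h by blast
  qed
qed

lemma local_idem: assumes "local_ring R" shows "Idem_set R = {\<zero>, \<one>}"
proof
  show "{\<zero>, \<one>} \<subseteq> Idem_set R" by (auto simp: Idem_set_def)
  obtain M where M: "maximal_left_ideal R M" using assms unfolding local_ring_def by blast
  show "Idem_set R \<subseteq> {\<zero>, \<one>}"
  proof
    fix e assume "e \<in> Idem_set R"
    then have ec: "e \<in> carrier R" and ee: "e \<otimes> e = e" by (auto simp: Idem_set_def)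
    have fc: "\<one> \<ominus> e \<in> carrier R" using ec by simp
    have ff: "(\<one> \<ominus> e) \<otimes> (\<one> \<ominus> e) = \<one> \<ominus> e"
      using ec ee by (simp add: a_minus_def l_distr r_distr l_minus r_minus minus_add a_ac r_neg r_neg1 r_neg2)
    have e1: "e \<in> M \<or> e = \<one>" using idem_in_max[OF assms M ec ee] .
    have e2: "\<one> \<ominus> e \<in> M \<or> \<one> \<ominus> e = \<one>" using idem_in_max[OF assms M fc ff] .
    have LM: "left_ideal R M" using maximal_left[OF M] .
    show "e \<in> {\<zero>, \<one>}"
    proof (cases "e = \<one>")
      case True then show ?thesis by simp
    next
      case False
      then have eM: "e \<in> M" using e1 by blast
      show ?thesis
      proof (cases "\<one> \<ominus> e = \<one>")
        case True
        have "\<one> \<ominus> (\<one> \<ominus> e) = e" using ec by (simp add: a_minus_def minus_add a_ac r_neg r_neg1 r_neg2)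
        then have "e = \<zero>" using True by (simp add: a_minus_def r_neg)
        then show ?thesis by simp
      next
        case False
        then have "\<one> \<ominus> e \<in> M" using e2 by blast
        then have "(\<one> \<ominus> e) \<oplus> e \<in> M" using left_idealD(3)[OF LM] eM by blast
        moreover have "(\<one> \<ominus> e) \<oplus> e = \<one>" using ec by (simp add: a_minus_def a_assoc l_neg)
        ultimately show ?thesis using maximal_one[OF M] by simp
      qed
    qed
  qed
qed

lemma P_local: assumes "\<one> \<noteq> \<zero>" P shows "local_ring R"
proof -
  have JL: "left_ideal R (jacobson R)" by (rule jac_left_ideal)
  have "{r \<otimes> \<zero> | r. r \<in> carrier R} = {\<zero>}" by (auto, rule exI[of _ \<zero>], simp)
  then have "left_ideal R {\<zero>}" using principal_left[of \<zero>] by simp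
  then obtain M where M: "maximal_left_ideal R M" using maximal_exists assms by blast
  have eqJ: "K = jacobson R" if K: "maximal_left_ideal R K" for K
  proof
    show "jacobson R \<subseteq> K" using jac_sub[OF K] .
    have KL: "left_ideal R K" using maximal_left[OF K] .
    show "K \<subseteq> jacobson R"
    proof
      fix x assume xK: "x \<in> K"
      have xc: "x \<in> carrier R" using xK left_idealD(1)[OF KL] by blast
      show "x \<in> jacobson R"
      proof (rule ccontr)
        assume nx: "x \<notin> jacobson R"
        then have "x \<ominus> \<one> \<in> K \<or> x \<oplus> \<one> \<in> K" using assms(2) xc jac_sub[OF K] unfolding P_def by blast
        then have "\<one> \<in> K"
        proof
          assume "x \<ominus> \<one> \<in> K"
          then have "x \<ominus> (x \<ominus> \<one>) \<in> K" using left_idealD(6)[OF KL] xK by blast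
          then show ?thesis using alg1[OF xc] by simp
        next
          assume "x \<oplus> \<one> \<in> K"
          then have "(x \<oplus> \<one>) \<ominus> x \<in> K" using left_idealD(6)[OF KL] xK by blast
          then show ?thesis using alg2[OF xc] by simp
        qed
        then show False using maximal_one[OF K] by blast
      qed
    qed
  qed
  show ?thesis unfolding local_ring_def using M eqJ by blast
qed

end

context ring begin

definition emb :: "int \<Rightarrow> 'a" where "emb n = [n] \<cdot> \<one>"

lemma emb_closed[simp]: "emb n \<in> carrier R"
  unfolding emb_def by (rule add.int_pow_closed) simp

lemma emb_add: "emb (m + n) = emb m \<oplus> emb n"
  unfolding emb_def using add.int_pow_mult[of \<one> m n] by simp

lemma emb_0[simp]: "emb 0 = \<zero>"
  unfolding emb_def add_pow_def by simp

lemma emb_1[simp]: "emb 1 = \<one>"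
  unfolding emb_def by simp

lemma emb_neg: "emb (- n) = \<ominus> emb n"
  unfolding emb_def using add.int_pow_neg[of \<one> n] by simp

lemma emb_diff: "emb (m - n) = emb m \<oplus> \<ominus> emb n"
  using emb_add[of m "- n"] emb_neg[of n] by simp

lemma emb_mult: "emb (m * n) = emb m \<otimes> emb n"
proof -
  have "emb m \<otimes> emb n = [m] \<cdot> (\<one> \<otimes> emb n)" unfolding emb_def[of m]
    by (rule add_pow_ldistr_int) (simp_all add: emb_closed[unfolded emb_def])
  also have "\<dots> = [m] \<cdot> ([n] \<cdot> \<one>)" by (simp add: emb_def[symmetric])
  also have "\<dots> = [(n * m)] \<cdot> \<one>" using add.int_pow_pow[of \<one> m n] by simp
  finally show ?thesis by (simp add: emb_def mult.commute)
qed

lemma emb_comm: "x \<in> carrier R \<Longrightarrow> x \<otimes> emb n = emb n \<otimes> x"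
  unfolding emb_def using add_pow_ldistr_int[of \<one> x n] add_pow_rdistr_int[of x \<one> n] by simp

definition rel :: "'a \<Rightarrow> int \<Rightarrow> bool" where "rel x n \<longleftrightarrow> x \<ominus> emb n \<in> jacobson R"

lemma JL: "left_ideal R (jacobson R)" by (rule jac_left_ideal)
lemma Jc: "x \<in> jacobson R \<Longrightarrow> x \<in> carrier R" using left_idealD(1)[OF JL] by blast

lemma rel_add: assumes "x \<in> carrier R" "y \<in> carrier R" "rel x m" "rel y n"
  shows "rel (x \<oplus> y) (m + n)"
proof -
  have "(x \<ominus> emb m) \<oplus> (y \<ominus> emb n) \<in> jacobson R"
    using assms left_idealD(3)[OF JL] unfolding rel_def by blast
  moreover have "(x \<ominus> emb m) \<oplus> (y \<ominus> emb n) = (x \<oplus> y) \<ominus> emb (m + n)"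
    using assms(1,2) by (simp add: emb_add a_minus_def minus_add a_ac)
  ultimately show ?thesis unfolding rel_def by simp
qed

lemma rel_mult: assumes "x \<in> carrier R" "y \<in> carrier R" "rel x m" "rel y n"
  shows "rel (x \<otimes> y) (m * n)"
proof -
  have "x \<otimes> (y \<ominus> emb n) \<in> jacobson R"
    using assms left_idealD(5)[OF JL] unfolding rel_def by blast
  moreover have "(x \<ominus> emb m) \<otimes> emb n \<in> jacobson R"
  proof -
    have "emb n \<otimes> (x \<ominus> emb m) \<in> jacobson R"
      using assms left_idealD(5)[OF JL] unfolding rel_def by simp
    then show ?thesis using emb_comm[of "x \<ominus> emb m" n] assms(1) by simp
  qed
  ultimately have "x \<otimes> (y \<ominus> emb n) \<oplus> (x \<ominus> emb m) \<otimes> emb n \<in> jacobson R"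
    using left_idealD(3)[OF JL] by blast
  moreover have "x \<otimes> (y \<ominus> emb n) \<oplus> (x \<ominus> emb m) \<otimes> emb n = (x \<otimes> y) \<ominus> emb (m * n)"
    using assms(1,2) by (simp add: emb_mult a_minus_def r_distr l_distr r_minus l_minus a_ac r_neg1 r_neg2)
  ultimately show ?thesis unfolding rel_def by simp
qed

lemma rel_diff: assumes "x \<in> carrier R" "rel x m" "rel x n"
  shows "emb (m - n) \<in> jacobson R"
proof -
  have "(x \<ominus> emb n) \<ominus> (x \<ominus> emb m) \<in> jacobson R"
    using assms left_idealD(6)[OF JL] unfolding rel_def by blast
  moreover have "(x \<ominus> emb n) \<ominus> (x \<ominus> emb m) = emb (m - n)"
    using assms(1) by (simp add: emb_diff a_minus_def minus_add a_ac r_neg1 r_neg2)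
  ultimately show ?thesis by simp
qed

lemma rel_emb: "rel (emb n) n"
  unfolding rel_def by (simp add: a_minus_def r_neg left_idealD(2)[OF JL])

lemma emb_J_iff:
  assumes "\<one> \<noteq> \<zero>" "k = 2 \<or> k = 3" "emb k \<in> jacobson R"
  shows "emb m \<in> jacobson R \<longleftrightarrow> m mod k = 0"
proof -
  have kJ: "emb (q * k) \<in> jacobson R" for q
    using left_idealD(5)[OF JL, of "emb q" "emb k"] assms(3) by (simp add: emb_mult)
  have dec: "emb m = emb ((m div k) * k) \<oplus> emb (m mod k)"
    using emb_add[of "(m div k) * k" "m mod k"] by simp
  have "emb m \<in> jacobson R \<longleftrightarrow> emb (m mod k) \<in> jacobson R"
  proof
    assume "emb m \<in> jacobson R"
    then have "emb m \<ominus> emb ((m div k) * k) \<in> jacobson R" using kJ left_idealD(6)[OF JL] by blast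
    moreover have "emb m \<ominus> emb ((m div k) * k) = emb (m mod k)"
      unfolding dec by (simp add: a_minus_def a_ac r_neg r_neg1 r_neg2)
    ultimately show "emb (m mod k) \<in> jacobson R" by simp
  next
    assume "emb (m mod k) \<in> jacobson R"
    then show "emb m \<in> jacobson R" using kJ left_idealD(3)[OF JL] dec by metis
  qed
  moreover have "emb r \<notin> jacobson R" if "0 < r" "r < k" for r
  proof
    assume rJ: "emb r \<in> jacobson R"
    have "r = 1 \<or> (r = 2 \<and> k = 3)" using that assms(2) by auto
    then show False
    proof
      assume "r = 1" then show False using rJ one_notin_J[OF assms(1)] by simp
    next
      assume h: "r = 2 \<and> k = 3"
      then have "emb 3 \<ominus> emb 2 \<in> jacobson R" using rJ assms(3) left_idealD(6)[OF JL] by blast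
      moreover have "emb 3 \<ominus> emb 2 = \<one>"
        using emb_add[of 2 1] by (simp add: a_minus_def a_ac r_neg r_neg1 r_neg2)
      ultimately show False using one_notin_J[OF assms(1)] by simp
    qed
  qed
  moreover have "0 \<le> m mod k" "m mod k < k" using assms(2) by auto
  ultimately show ?thesis by (metis emb_0 left_idealD(2)[OF JL] le_less)
qed

lemma J_rel_iff: assumes "x \<in> carrier R" "rel x n" shows "x \<in> jacobson R \<longleftrightarrow> emb n \<in> jacobson R"
proof
  assume "x \<in> jacobson R"
  then have "x \<ominus> (x \<ominus> emb n) \<in> jacobson R" using assms left_idealD(6)[OF JL] unfolding rel_def by blast
  moreover have "x \<ominus> (x \<ominus> emb n) = emb n" using assms(1)
    by (simp only: a_minus_def minus_add minus_minus emb_closed add.inv_closed r_neg2)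
  ultimately show "emb n \<in> jacobson R" by simp
next
  assume "emb n \<in> jacobson R"
  then have "(x \<ominus> emb n) \<oplus> emb n \<in> jacobson R" using assms left_idealD(3)[OF JL] unfolding rel_def by blast
  moreover have "(x \<ominus> emb n) \<oplus> emb n = x" using assms(1)
    by (simp add: a_minus_def a_ac r_neg r_neg1 r_neg2)
  ultimately show "x \<in> jacobson R" by simp
qed

lemma P_iso_k:
  assumes one0: "\<one> \<noteq> \<zero>" and PP: P and k: "k = 2 \<or> k = 3" and kJ: "emb k \<in> jacobson R"
  shows "R Quot jacobson R \<simeq> ZFact k"
proof -
  have ex: "\<exists>n. rel x n" if xc: "x \<in> carrier R" for x
  proof -
    have "x \<in> jacobson R \<or> x \<ominus> \<one> \<in> jacobson R \<or> x \<oplus> \<one> \<in> jacobson R"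
      using PP xc unfolding P_def by blast
    moreover have "x \<ominus> emb 0 = x" using xc by (simp add: a_minus_def)
    moreover have "x \<ominus> emb (-1) = x \<oplus> \<one>" using xc by (simp add: a_minus_def emb_neg)
    ultimately show ?thesis unfolding rel_def by (metis emb_1)
  qed
  define c where "c x = (SOME n. rel x n)" for x
  have cr: "rel x (c x)" if "x \<in> carrier R" for x
    unfolding c_def using someI_ex[OF ex[OF that]] .
  have uniq: "ZMod k m = ZMod k n" if "x \<in> carrier R" "rel x m" "rel x n" for x m n
  proof -
    have "emb (m - n) \<in> jacobson R" using rel_diff that by blast
    then have "(m - n) mod k = 0" using emb_J_iff[OF one0 k kJ] by blast
    then have "k dvd m - n" by (simp add: dvd_eq_mod_eq_0)
    then have "m mod k = n mod k" by (simp add: mod_eq_dvd_iff)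
    then show ?thesis using ZMod_eq_mod by blast
  qed
  define h where "h x = ZMod k (c x)" for x
  have hom: "h \<in> ring_hom R (ZFact k)"
  proof (rule ring_hom_memI)
    show "h x \<in> carrier (ZFact k)" for x unfolding h_def by (rule ZMod_closed)
    show "h (x \<otimes> y) = h x \<otimes>\<^bsub>ZFact k\<^esub> h y" if "x \<in> carrier R" "y \<in> carrier R" for x y
    proof -
      have "h (x \<otimes> y) = ZMod k (c x * c y)" unfolding h_def
        using uniq[of "x \<otimes> y" "c (x \<otimes> y)" "c x * c y"] cr rel_mult[OF that cr cr] that by blast
      then show ?thesis unfolding h_def by (simp add: ZMod_mult)
    qed
    show "h (x \<oplus> y) = h x \<oplus>\<^bsub>ZFact k\<^esub> h y" if "x \<in> carrier R" "y \<in> carrier R" for x y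
    proof -
      have "h (x \<oplus> y) = ZMod k (c x + c y)" unfolding h_def
        using uniq[of "x \<oplus> y" "c (x \<oplus> y)" "c x + c y"] cr rel_add[OF that cr cr] that by blast
      then show ?thesis unfolding h_def by (simp add: ZMod_add)
    qed
    show "h \<one> = \<one>\<^bsub>ZFact k\<^esub>"
    proof -
      have "rel \<one> 1" using rel_emb[of 1] by simp
      then have "h \<one> = ZMod k 1" unfolding h_def using uniq[of \<one> "c \<one>" 1] cr by blast
      then show ?thesis by (simp add: ZMod_one)
    qed
  qed
  have rhr: "ring_hom_ring R (ZFact k) h" by (rule ring_hom_ringI2[OF ring_axioms ring_ZFact hom])
  have surj: "h ` carrier R = carrier (ZFact k)"
  proof
    show "h ` carrier R \<subseteq> carrier (ZFact k)" unfolding h_def using ZMod_closed by blast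
    show "carrier (ZFact k) \<subseteq> h ` carrier R"
    proof
      fix Y assume "Y \<in> carrier (ZFact k)"
      then obtain n where Y: "Y = ZMod k n" using ZFact_carrier by blast
      have "h (emb n) = ZMod k n" unfolding h_def by (rule uniq[OF emb_closed cr[OF emb_closed] rel_emb])
      then have "Y = h (emb n)" using Y by simp
      then show "Y \<in> h ` carrier R" using emb_closed by blast
    qed
  qed
  have ker: "a_kernel R (ZFact k) h = jacobson R"
  proof -
    have "h x = \<zero>\<^bsub>ZFact k\<^esub> \<longleftrightarrow> x \<in> jacobson R" if xc: "x \<in> carrier R" for x
    proof -
      have "h x = \<zero>\<^bsub>ZFact k\<^esub> \<longleftrightarrow> ZMod k (c x) = ZMod k 0" unfolding h_def by (simp add: ZMod_zero)
      also have "\<dots> \<longleftrightarrow> c x mod k = 0" using ZMod_eq_mod by simp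
      also have "\<dots> \<longleftrightarrow> emb (c x) \<in> jacobson R" using emb_J_iff[OF one0 k kJ] by simp
      also have "\<dots> \<longleftrightarrow> x \<in> jacobson R" using J_rel_iff[OF xc cr[OF xc]] by simp
      finally show ?thesis .
    qed
    then show ?thesis unfolding a_kernel_def' using Jc by blast
  qed
  show ?thesis using ring_hom_ring.FactRing_iso[OF rhr surj] ker by simp
qed

lemma P_iso:
  assumes one0: "\<one> \<noteq> \<zero>" and PP: P
  shows "R Quot jacobson R \<simeq> ZFact 2 \<or> R Quot jacobson R \<simeq> ZFact 3"
proof -
  have "emb 2 \<in> jacobson R \<or> emb 2 \<ominus> \<one> \<in> jacobson R \<or> emb 2 \<oplus> \<one> \<in> jacobson R"
    using PP unfolding P_def by simp
  moreover have "emb 2 \<ominus> \<one> = \<one>" using emb_add[of 1 1]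
    by (simp add: a_minus_def a_ac r_neg r_neg1 r_neg2)
  moreover have "emb 2 \<oplus> \<one> = emb 3" using emb_add[of 2 1] by simp
  ultimately have "emb 2 \<in> jacobson R \<or> emb 3 \<in> jacobson R" using one_notin_J[OF one0] by auto
  then show ?thesis using P_iso_k[OF one0 PP] by auto
qed


lemma iso_P:
  assumes one0: "\<one> \<noteq> \<zero>" and k: "k = 2 \<or> k = 3" and iso: "R Quot jacobson R \<simeq> ZFact k"
  shows P
proof -
  obtain \<phi> where phi: "\<phi> \<in> ring_iso (R Quot jacobson R) (ZFact k)" using iso unfolding is_ring_iso_def by blast
  have asg: "abelian_subgroup (jacobson R) R"
    using abelian_subgroupI3[OF _ is_abelian_group] JL unfolding left_ideal_def by blast
  interpret Z: cring "ZFact k" by (rule ZFact_is_cring)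
  define \<eta> where "\<eta> x = \<phi> (jacobson R +> x)" for x
  have cosetc: "jacobson R +> x \<in> carrier (R Quot jacobson R)" if "x \<in> carrier R" for x
    using that unfolding FactRing_def A_RCOSETS_defs a_r_coset_def by auto
  have \<eta>c: "\<eta> x \<in> carrier (ZFact k)" if "x \<in> carrier R" for x
    unfolding \<eta>_def using ring_iso_memE(1)[OF phi cosetc[OF that]] .
  have \<eta>add: "\<eta> (x \<oplus> y) = \<eta> x \<oplus>\<^bsub>ZFact k\<^esub> \<eta> y" if "x \<in> carrier R" "y \<in> carrier R" for x y
  proof -
    have "(jacobson R +> x) \<oplus>\<^bsub>R Quot jacobson R\<^esub> (jacobson R +> y) = jacobson R +> (x \<oplus> y)"
      unfolding FactRing_def using abelian_subgroup.a_rcos_sum[OF asg that] by simp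
    then show ?thesis unfolding \<eta>_def using ring_iso_memE(3)[OF phi cosetc[OF that(1)] cosetc[OF that(2)]] by simp
  qed
  have \<eta>1: "\<eta> \<one> = \<one>\<^bsub>ZFact k\<^esub>"
    unfolding \<eta>_def using ring_iso_memE(4)[OF phi] unfolding FactRing_def by simp
  have \<eta>0: "\<eta> \<zero> = \<zero>\<^bsub>ZFact k\<^esub>"
  proof -
    have "\<eta> \<zero> = \<eta> \<zero> \<oplus>\<^bsub>ZFact k\<^esub> \<eta> \<zero>" using \<eta>add[of \<zero> \<zero>] by simp
    then show ?thesis using Z.add.r_cancel_one'[OF \<eta>c \<eta>c, of \<zero> \<zero>] by simp
  qed
  have inj: "x \<in> jacobson R" if xc: "x \<in> carrier R" and e: "\<eta> x = \<zero>\<^bsub>ZFact k\<^esub>" for x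
  proof -
    have inj_on: "inj_on \<phi> (carrier (R Quot jacobson R))" using phi unfolding ring_iso_def bij_betw_def by blast
    have "\<phi> (jacobson R +> x) = \<phi> (jacobson R +> \<zero>)" using e \<eta>0 unfolding \<eta>_def by simp
    then have "jacobson R +> x = jacobson R +> \<zero>" using inj_on cosetc xc by (meson inj_onD zero_closed)
    moreover have "jacobson R +> \<zero> = jacobson R"
      using abelian_subgroup.a_rcos_const[OF asg left_idealD(2)[OF JL]] .
    ultimately show ?thesis using abelian_subgroup.a_rcos_self[OF asg xc] by simp
  qed
  have \<eta>m1: "\<eta> (\<ominus> \<one>) = ZMod k (-1)"
  proof -
    have "\<eta> (\<ominus> \<one>) \<oplus>\<^bsub>ZFact k\<^esub> \<one>\<^bsub>ZFact k\<^esub> = \<zero>\<^bsub>ZFact k\<^esub>"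
      using \<eta>add[of "\<ominus> \<one>" \<one>] \<eta>1 \<eta>0 by (simp add: l_neg)
    then have a: "\<eta> (\<ominus> \<one>) = \<ominus>\<^bsub>ZFact k\<^esub> \<one>\<^bsub>ZFact k\<^esub>"
      using Z.minus_equality[OF _ Z.one_closed \<eta>c] by simp
    have "ZMod k (-1) \<oplus>\<^bsub>ZFact k\<^esub> \<one>\<^bsub>ZFact k\<^esub> = \<zero>\<^bsub>ZFact k\<^esub>"
      using ZMod_add[of k "-1" 1] ZMod_one ZMod_zero by simp
    then have "ZMod k (-1) = \<ominus>\<^bsub>ZFact k\<^esub> \<one>\<^bsub>ZFact k\<^esub>"
      using Z.minus_equality[OF _ Z.one_closed ZMod_closed] by simp
    with a show ?thesis by simp
  qed
  show P unfolding P_def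
  proof
    fix x assume xc: "x \<in> carrier R"
    obtain n where n: "\<eta> x = ZMod k n" using ZFact_carrier \<eta>c[OF xc] by blast
    have "n mod k = 0 \<or> n mod k = 1 \<or> (k = 3 \<and> n mod k = 2)" using k by auto
    then have "\<exists>a \<in> {\<zero>, \<one>, \<ominus> \<one>}. \<eta> x = \<eta> a"
    proof (elim disjE)
      assume "n mod k = 0" then have "\<eta> x = ZMod k 0" using n ZMod_eq_mod by simp
      then show ?thesis using \<eta>0 ZMod_zero by auto
    next
      assume "n mod k = 1" then have "\<eta> x = ZMod k 1" using n ZMod_eq_mod k by auto
      then show ?thesis using \<eta>1 ZMod_one by auto
    next
      assume "k = 3 \<and> n mod k = 2" then have "\<eta> x = ZMod k (-1)" using n ZMod_eq_mod by auto
      then show ?thesis using \<eta>m1 by auto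
    qed
    then obtain a where a: "a \<in> {\<zero>, \<one>, \<ominus> \<one>}" "\<eta> x = \<eta> a" by blast
    have ac: "a \<in> carrier R" using a by auto
    have "\<eta> x = \<eta> ((x \<ominus> a) \<oplus> a)" using xc ac by (simp add: a_minus_def a_assoc l_neg)
    also have "\<dots> = \<eta> (x \<ominus> a) \<oplus>\<^bsub>ZFact k\<^esub> \<eta> a" using \<eta>add xc ac by simp
    finally have "\<eta> (x \<ominus> a) \<oplus>\<^bsub>ZFact k\<^esub> \<eta> a = \<eta> a" using a by simp
    then have "\<eta> (x \<ominus> a) = \<zero>\<^bsub>ZFact k\<^esub>" using Z.add.r_cancel_one[OF \<eta>c \<eta>c] xc ac by simp
    then have "x \<ominus> a \<in> jacobson R" using inj xc ac by simp
    then show "x \<in> jacobson R \<or> x \<ominus> \<one> \<in> jacobson R \<or> x \<oplus> \<one> \<in> jacobson R"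
      using a(1) xc by (auto simp: a_minus_def)
  qed
qed

end

theorem mainTheorem13:
  fixes R :: "('a, 'b) ring_scheme"
  assumes "ring R" and "\<one>\<^bsub>R\<^esub> \<noteq> \<zero>\<^bsub>R\<^esub>"
  shows "(local_ring R \<and> uniquely_weakly_J_clean R
            \<longleftrightarrow> uniquely_weakly_J_clean R \<and> Idem_set R = {\<zero>\<^bsub>R\<^esub>, \<one>\<^bsub>R\<^esub>})
       \<and> (uniquely_weakly_J_clean R \<and> Idem_set R = {\<zero>\<^bsub>R\<^esub>, \<one>\<^bsub>R\<^esub>}
            \<longleftrightarrow> (R Quot jacobson R \<simeq> ZFact 2 \<or> R Quot jacobson R \<simeq> ZFact 3))"
proof -
  interpret ring R by (rule assms(1))
  have one0: "\<one>\<^bsub>R\<^esub> \<noteq> \<zero>\<^bsub>R\<^esub>" using assms(2) .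
  have p1: "local_ring R \<and> uniquely_weakly_J_clean R
            \<longleftrightarrow> uniquely_weakly_J_clean R \<and> Idem_set R = {\<zero>\<^bsub>R\<^esub>, \<one>\<^bsub>R\<^esub>}"
    using local_idem uwjc_P P_local[OF one0] by blast
  have p2: "uniquely_weakly_J_clean R \<and> Idem_set R = {\<zero>\<^bsub>R\<^esub>, \<one>\<^bsub>R\<^esub>}
            \<longleftrightarrow> (R Quot jacobson R \<simeq> ZFact 2 \<or> R Quot jacobson R \<simeq> ZFact 3)"
  proof
    assume "uniquely_weakly_J_clean R \<and> Idem_set R = {\<zero>\<^bsub>R\<^esub>, \<one>\<^bsub>R\<^esub>}"
    then show "R Quot jacobson R \<simeq> ZFact 2 \<or> R Quot jacobson R \<simeq> ZFact 3"
      using uwjc_P P_iso[OF one0] by blast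
  next
    assume "R Quot jacobson R \<simeq> ZFact 2 \<or> R Quot jacobson R \<simeq> ZFact 3"
    then have "P" using iso_P[OF one0] by blast
    then show "uniquely_weakly_J_clean R \<and> Idem_set R = {\<zero>\<^bsub>R\<^esub>, \<one>\<^bsub>R\<^esub>}"
      using P_idem P_uwjc[OF one0] by blast
  qed
  show ?thesis using p1 p2 by blast
qed

end
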